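(* Let $s,k$ be positive integers, $\vec s=(s,\dots,s)\in\mathbb{Z}_+^k$ and $n=ks$. Then there exist two $\vec s$-multipermutations $\pi,\pi'$ such that \[ \max\bigl(\mathrm{LCS}(\pi,\pi'),\ \mathrm{LCS}(\pi,\overleftarrow{\pi'})\bigr)\leq\sqrt n+s. \]
   Context: For $\vec s\in\mathbb{Z}_+^k$, an $\vec s$-multipermutation is a word over $\{1,\dots,k\}$ in which each letter $l$ appears exactly $s_l$ times. $\mathrm{LCS}(w,w')$ is the length of a longest common subsequence of words $w,w'$. For a word $w$, $\overleftarrow{w}$ denotes its reverse (the word written backward). *)

theory Defs
  imports Complex_Main "HOL-Library.Sublist"
begin

definition multiperm :: "nat \<Rightarrow> (nat \<Rightarrow> nat) \<Rightarrow> nat list \<Rightarrow> bool" where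
  "multiperm k sv w \<longleftrightarrow> set w \<subseteq> {1..k} \<and> (\<forall>l\<in>{1..k}. count_list w l = sv l)"

definition LCS :: "'a list \<Rightarrow> 'a list \<Rightarrow> nat" where
  "LCS w w' = Max {length u | u. subseq u w \<and> subseq u w'}"

end

theory Submission
  imports Defs "HOL-Library.Multiset"
begin

lemma subseq_set: "subseq xs ys \<Longrightarrow> set xs \<subseteq> set ys"
  by (auto elim: list_emb_set)

lemma subseq_sorted_wrt: "subseq xs ys \<Longrightarrow> sorted_wrt P ys \<Longrightarrow> sorted_wrt P xs"
proof (induction rule: list_emb.induct)
  case (list_emb_Cons2 x y xs ys)
  then show ?case using subseq_set[OF list_emb_Cons2(2)] by auto
qed auto

lemma subseq_distinct: "subseq xs ys \<Longrightarrow> distinct ys \<Longrightarrow> distinct xs"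
proof (induction rule: list_emb.induct)
  case (list_emb_Cons2 x y xs ys)
  then show ?case using subseq_set[OF list_emb_Cons2(2)] by auto
qed auto

lemma subseq_rev: "subseq xs ys \<Longrightarrow> subseq (rev xs) (rev ys)"
proof (induction rule: list_emb.induct)
  case (list_emb_Cons xs ys y)
  then show ?case by (simp add: subseq_rev_drop_many)
next
  case (list_emb_Cons2 x y xs ys)
  then show ?case by (simp add: list_emb_append_mono)
qed auto

lemma subseq_concat_replicate:
  "subseq u (concat (replicate s w)) \<Longrightarrow>
   \<exists>us. length us = s \<and> u = concat us \<and> (\<forall>v\<in>set us. subseq v w)"
proof (induction s arbitrary: u)
  case 0
  then show ?case by auto
next
  case (Suc s)
  from Suc.prems have "subseq u (w @ concat (replicate s w))" by simp
  then obtain u1 u2 where "u = u1 @ u2" "subseq u1 w" "subseq u2 (concat (replicate s w))"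
    by (rule subseq_appendE)
  with Suc.IH[of u2] obtain us where "length us = s" "u2 = concat us" "\<forall>v\<in>set us. subseq v w"
    by blast
  then show ?case using \<open>u = u1 @ u2\<close> \<open>subseq u1 w\<close>
    by (intro exI[of _ "u1 # us"]) auto
qed

lemma count_bound:
  fixes vs :: "nat list list"
  shows "(\<forall>v\<in>set vs. sorted_wrt (<) v) \<Longrightarrow> sorted (concat vs) \<Longrightarrow> set (concat vs) \<subseteq> {b..q}
    \<Longrightarrow> b \<le> q \<Longrightarrow> length (concat vs) + b \<le> q + length vs"
proof (induction vs arbitrary: b)
  case Nil
  then show ?case by simp
next
  case (Cons v vs)
  show ?case
  proof (cases "v = []")
    case True
    have "length (concat vs) + b \<le> q + length vs" using Cons.IH Cons.prems True by simp
    then show ?thesis using True by simp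
  next
    case False
    define m where "m = last v"
    have mv: "m \<in> set v" using False m_def by simp
    have sv: "sorted v" using Cons.prems(1) strict_sorted_iff by auto
    have dv: "distinct v" using Cons.prems(1) strict_sorted_iff by auto
    have "\<forall>x\<in>set v. x \<le> m"
    proof
      fix x assume "x \<in> set v"
      then obtain i where "i < length v" "v ! i = x" by (auto simp: in_set_conv_nth)
      moreover have "m = v ! (length v - 1)" using False m_def by (simp add: last_conv_nth)
      ultimately show "x \<le> m" using sv False by (auto intro!: sorted_nth_mono)
    qed
    hence "set v \<subseteq> {b..m}" using Cons.prems(3) by auto
    hence "card (set v) \<le> card {b..m}" by (intro card_mono) auto
    hence lv: "length v \<le> m + 1 - b" using distinct_card[OF dv] by simp
    have mq: "m \<le> q" using mv Cons.prems(3) by auto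
    have bm: "b \<le> m" using mv Cons.prems(3) by auto
    have "\<forall>y\<in>set (concat vs). m \<le> y" using Cons.prems(2) mv by (auto simp: sorted_append)
    hence "set (concat vs) \<subseteq> {m..q}" using Cons.prems(3) by auto
    then have "length (concat vs) + m \<le> q + length vs"
      using Cons.IH[of m] Cons.prems mq by (auto simp: sorted_append)
    then show ?thesis using lv bm by simp
  qed
qed

lemma count_list_distinct: "distinct xs \<Longrightarrow> count_list xs x = (if x \<in> set xs then 1 else 0)"
  by (induction xs) (auto simp: count_list_0_iff)

lemma count_list_concat_replicate: "count_list (concat (replicate s w)) x = s * count_list w x"
  by (induction s) auto

lemma sum_list_le: "(\<forall>v\<in>set us. f v \<le> (c::nat)) \<Longrightarrow> sum_list (map f us) \<le> length us * c"
  by (induction us) auto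

lemma concat_replicate_comm: "concat (replicate s w) @ w = w @ concat (replicate s w)"
  by (induction s) auto

lemma rev_concat_replicate: "rev (concat (replicate s w)) = concat (replicate s (rev w))"
  by (induction s) (auto simp: concat_replicate_comm)

lemma LCS_le:
  assumes "\<And>u. subseq u w \<Longrightarrow> subseq u w' \<Longrightarrow> length u \<le> B"
  shows "LCS w w' \<le> B"
proof -
  have fin: "finite {length u | u. subseq u w \<and> subseq u w'}"
    by (rule finite_subset[of _ "{0..length w}"]) (auto dest: list_emb_length)
  have ne: "{length u | u. subseq u w \<and> subseq u w'} \<noteq> {}" by auto
  show ?thesis unfolding LCS_def using Max_le_iff[OF fin ne] assms by auto
qed

lemma exists_h:
  fixes s k :: nat
  assumes "s > 0"
  shows "\<exists>h. h \<ge> 1 \<and> s * (h - 1)^2 \<le> k \<and> k < s * h^2"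
proof -
  let ?P = "\<lambda>h. k < s * h^2"
  have "?P (k+1)"
  proof -
    have "k < (k+1)^2" by (simp add: power2_eq_square)
    also have "\<dots> \<le> s * (k+1)^2" using assms by simp
    finally show ?thesis .
  qed
  hence P: "?P (LEAST h. ?P h)" by (rule LeastI)
  define h where "h = (LEAST h. ?P h)"
  have Ph: "k < s * h^2" using P h_def by simp
  have h0: "h \<noteq> 0" using Ph by (cases h) auto
  have "h - 1 < h" using h0 by simp
  hence "\<not> ?P (h - 1)" unfolding h_def by (rule not_less_Least)
  thus ?thesis using h0 Ph by (intro exI[of _ h]) auto
qed

theorem theorem13:
  fixes s k :: nat
  assumes "s > 0" and "k > 0"
  shows "\<exists>\<pi> \<pi>'. multiperm k (\<lambda>_. s) \<pi> \<and> multiperm k (\<lambda>_. s) \<pi>' \<and>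
           real (max (LCS \<pi> \<pi>') (LCS \<pi> (rev \<pi>'))) \<le> sqrt (real (k * s)) + real s"
proof -
  obtain h where h1: "h \<ge> 1" and h2: "s * (h - 1)^2 \<le> k" and h3: "k < s * h^2"
    using exists_h[OF assms(1)] by blast
  define grp where "grp = (\<lambda>x::nat. (x - 1) div h)"
  define q where "q = (k - 1) div h"
  define \<kappa> where "\<kappa> = (\<lambda>x. grp x * (k + 1) + (k - x))"
  define \<sigma> where "\<sigma> = sort_key \<kappa> [1..<k+1]"
  define \<pi> where "\<pi> = sort (concat (replicate s [1..<k+1]))"
  define \<pi>' where "\<pi>' = concat (replicate s \<sigma>)"
  have grp_mono: "grp x \<le> grp y" if "x \<le> y" for x y
    unfolding grp_def using that by (intro div_le_mono) simp
  have \<kappa>_inj: "inj_on \<kappa> {1..k}"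
  proof
    fix x y assume x: "x \<in> {1..k}" and y: "y \<in> {1..k}" and e: "\<kappa> x = \<kappa> y"
    have "\<kappa> x mod (k+1) = k - x" unfolding \<kappa>_def mod_mult_self3 using x by simp
    moreover have "\<kappa> y mod (k+1) = k - y" unfolding \<kappa>_def mod_mult_self3 using y by simp
    ultimately have "k - x = k - y" using e by simp
    thus "x = y" using x y by auto
  qed
  have set\<sigma>: "set \<sigma> = {1..k}" unfolding \<sigma>_def by auto
  have dist\<sigma>: "distinct \<sigma>" unfolding \<sigma>_def by simp
  have strict\<sigma>: "sorted_wrt (<) (map \<kappa> \<sigma>)"
  proof -
    have "distinct (map \<kappa> \<sigma>)" using dist\<sigma> \<kappa>_inj set\<sigma> by (simp add: distinct_map)
    thus ?thesis unfolding strict_sorted_iff \<sigma>_def by simp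
  qed
  have sorted\<pi>: "sorted \<pi>" unfolding \<pi>_def by simp
  have mp: "multiperm k (\<lambda>_. s) \<pi>"
  proof -
    have "count_list \<pi> l = s" if "l \<in> {1..k}" for l
    proof -
      have "count_list \<pi> l = count (mset \<pi>) l" by (simp add: count_mset)
      also have "\<dots> = count_list (concat (replicate s [1..<k+1])) l"
        unfolding \<pi>_def by (simp add: count_mset)
      also have "\<dots> = s" using that
        by (simp add: count_list_concat_replicate count_list_distinct)
      finally show ?thesis .
    qed
    moreover have "set \<pi> \<subseteq> {1..k}" unfolding \<pi>_def by auto
    ultimately show ?thesis unfolding multiperm_def by auto
  qed
  have mp': "multiperm k (\<lambda>_. s) \<pi>'"
    unfolding multiperm_def \<pi>'_def
    using set\<sigma> dist\<sigma> by (auto simp: count_list_concat_replicate count_list_distinct)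
  have piece_sorted: "sorted v" if ps1: "sorted (concat us)" and ps2: "v \<in> set us" for v us
  proof -
    obtain a b where "us = a @ v # b" using split_list[OF ps2] by blast
    thus ?thesis using ps1 by (simp add: sorted_append)
  qed
  have B1: "LCS \<pi> \<pi>' \<le> q + s"
  proof (rule LCS_le)
    fix u assume u1: "subseq u \<pi>" and u2: "subseq u \<pi>'"
    have su: "sorted u" using subseq_sorted_wrt[OF u1 sorted\<pi>] .
    obtain us where us: "length us = s" "u = concat us" "\<forall>v\<in>set us. subseq v \<sigma>"
      using subseq_concat_replicate[OF u2[unfolded \<pi>'_def]] by blast
    have pieces: "sorted_wrt (<) (map grp v)" if v: "v \<in> set us" for v
    proof -
      have sv: "sorted v" using piece_sorted su us(2) v by blast
      have dv: "distinct v" using subseq_distinct us(3) v dist\<sigma> by blast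
      have sv': "sorted_wrt (<) v" using sv dv strict_sorted_iff by blast
      have kv: "sorted_wrt (<) (map \<kappa> v)"
        using subseq_sorted_wrt[OF subseq_map[OF bspec[OF us(3) v]] strict\<sigma>] .
      show ?thesis unfolding sorted_wrt_iff_nth_less
      proof (intro allI impI)
        fix i j assume ij: "i < j" "j < length (map grp v)"
        have a: "v ! i < v ! j" using sv' ij by (simp add: sorted_wrt_iff_nth_less)
        have b: "\<kappa> (v ! i) < \<kappa> (v ! j)" using kv ij by (simp add: sorted_wrt_iff_nth_less)
        have c: "grp (v ! i) \<le> grp (v ! j)" using a grp_mono by simp
        have "grp (v ! i) \<noteq> grp (v ! j)"
        proof
          assume "grp (v ! i) = grp (v ! j)"
          moreover have "v ! j \<in> set \<sigma>" using subseq_set[OF bspec[OF us(3) v]] ij by auto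
          ultimately have "\<kappa> (v ! i) > \<kappa> (v ! j)" unfolding \<kappa>_def using a set\<sigma> by auto
          thus False using b by simp
        qed
        thus "map grp v ! i < map grp v ! j" using c ij by simp
      qed
    qed
    have setu: "set u \<subseteq> {1..k}" using subseq_set[OF u1] mp unfolding multiperm_def by auto
    have "length (concat (map (map grp) us)) + 0 \<le> q + length (map (map grp) us)"
    proof (rule count_bound)
      show "\<forall>v\<in>set (map (map grp) us). sorted_wrt (<) v" using pieces by auto
      show "sorted (concat (map (map grp) us))"
        using su us(2) grp_mono
        by (simp add: map_concat[symmetric] sorted_wrt_map) (rule sorted_wrt_mono_rel[of _ "(\<le>)"], auto)
      show "set (concat (map (map grp) us)) \<subseteq> {0..q}"
        using setu us(2) unfolding q_def grp_def by (fastforce intro!: div_le_mono)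
    qed simp
    moreover have "length (concat (map (map grp) us)) = length u"
      using us(2) by (simp add: map_concat[symmetric])
    ultimately show "length u \<le> q + s" using us(1) by simp
  qed
  have B2: "LCS \<pi> (rev \<pi>') \<le> s * h"
  proof (rule LCS_le)
    fix u assume u1: "subseq u \<pi>" and u2: "subseq u (rev \<pi>')"
    have su: "sorted u" using subseq_sorted_wrt[OF u1 sorted\<pi>] .
    have "rev \<pi>' = concat (replicate s (rev \<sigma>))" unfolding \<pi>'_def by (rule rev_concat_replicate)
    then obtain us where us: "length us = s" "u = concat us" "\<forall>v\<in>set us. subseq v (rev \<sigma>)"
      using subseq_concat_replicate[of u s "rev \<sigma>"] u2 by auto
    have pieces: "length v \<le> h" if v: "v \<in> set us" for v
    proof (cases "v = []")
      case True then show ?thesis by simp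
    next
      case False
      have sv: "sorted v" using piece_sorted su us(2) v by blast
      have dv: "distinct v" using subseq_distinct[OF bspec[OF us(3) v]] dist\<sigma> by simp
      have sv': "sorted_wrt (<) v" using sv dv strict_sorted_iff by blast
      have "subseq (rev v) \<sigma>" using subseq_rev[OF bspec[OF us(3) v]] by simp
      hence "sorted_wrt (<) (map \<kappa> (rev v))"
        using subseq_sorted_wrt[OF subseq_map strict\<sigma>] by blast
      hence kv: "sorted_wrt (\<lambda>x y. y < x) (map \<kappa> v)" by (simp add: rev_map[symmetric] sorted_wrt_rev)
      have setv: "set v \<subseteq> {1..k}" using subseq_set[OF bspec[OF us(3) v]] set\<sigma> by auto
      have same: "grp (v ! i) = grp (v ! j)" if ij: "i < j" "j < length v" for i j
      proof -
        have a: "v ! i < v ! j" using sv' ij by (simp add: sorted_wrt_iff_nth_less)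
        have b: "\<kappa> (v ! j) < \<kappa> (v ! i)" using kv ij by (simp add: sorted_wrt_iff_nth_less)
        have c: "grp (v ! i) \<le> grp (v ! j)" using a grp_mono by simp
        show ?thesis
        proof (rule ccontr)
          assume "grp (v ! i) \<noteq> grp (v ! j)"
          hence "grp (v ! i) + 1 \<le> grp (v ! j)" using c by simp
          hence "(grp (v ! i) + 1) * (k+1) \<le> grp (v ! j) * (k+1)" by (rule mult_right_mono) simp
          hence "\<kappa> (v ! i) < \<kappa> (v ! j)" unfolding \<kappa>_def by simp
          thus False using b by simp
        qed
      qed
      define g where "g = grp (v ! 0)"
      have allg: "grp x = g" if "x \<in> set v" for x
      proof -
        obtain j where j: "j < length v" "x = v ! j" using \<open>x \<in> set v\<close> by (auto simp: in_set_conv_nth)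
        show ?thesis using same[of 0 j] j g_def by (cases "j = 0") auto
      qed
      have "set v \<subseteq> {g*h+1 .. g*h+h}"
      proof
        fix x assume x: "x \<in> set v"
        have x1: "x \<ge> 1" using setv x by auto
        have "(x - 1) div h = g" using allg[OF x] unfolding grp_def .
        moreover have "(x - 1) div h * h + (x - 1) mod h = x - 1" by (rule div_mult_mod_eq)
        moreover have "(x - 1) mod h < h" using h1 by simp
        ultimately have e: "g * h + (x - 1) mod h = x - 1" "(x - 1) mod h < h" by simp_all
        show "x \<in> {g*h+1 .. g*h+h}" using x1 e by (simp only: atLeastAtMost_iff) linarith
      qed
      hence "card (set v) \<le> card {g*h+1 .. g*h+h}" by (intro card_mono) auto
      thus ?thesis using distinct_card[OF dv] by simp
    qed
    have "length u = sum_list (map length us)" using us(2) by (simp add: length_concat)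
    also have "\<dots> \<le> length us * h" using pieces by (intro sum_list_le) auto
    finally show "length u \<le> s * h" using us(1) by (simp add: mult.commute)
  qed
  have qq: "q * q \<le> k * s"
  proof -
    have "q * h \<le> k - 1" unfolding q_def by (rule div_times_less_eq_dividend)
    hence qh: "q * h < k" using assms(2) by simp
    have "(q*h) * (q*h) \<le> k * k" using qh by (simp add: mult_le_mono)
    also have "\<dots> \<le> k * (s * h^2)" using h3 by simp
    finally have "(q*q) * (h*h) \<le> (k*s) * (h*h)" by (simp add: power2_eq_square algebra_simps)
    thus ?thesis using h1 by simp
  qed
  have r1: "real q \<le> sqrt (real (k * s))"
    by (rule real_le_rsqrt) (use qq in \<open>simp add: power2_eq_square flip: of_nat_mult\<close>)
  have hh: "(s*(h-1)) * (s*(h-1)) \<le> k * s"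
  proof -
    have "(s*(h-1)) * (s*(h-1)) = s * (s * (h-1)^2)" by (simp add: power2_eq_square algebra_simps)
    also have "\<dots> \<le> s * k" using h2 by simp
    finally show ?thesis by (simp add: mult.commute)
  qed
  have r2: "real (s*(h-1)) \<le> sqrt (real (k * s))"
    by (rule real_le_rsqrt) (use hh in \<open>simp add: power2_eq_square flip: of_nat_mult\<close>)
  have "s * h = s*(h-1) + s" using h1 by (cases h) auto
  hence r2': "real (s * h) \<le> sqrt (real (k * s)) + real s" using r2 by simp
  have r1': "real (q + s) \<le> sqrt (real (k * s)) + real s" using r1 by simp
  have "real (max (LCS \<pi> \<pi>') (LCS \<pi> (rev \<pi>'))) \<le> sqrt (real (k * s)) + real s"
  proof -
    have "real (LCS \<pi> \<pi>') \<le> real (q + s)" using B1 by linarith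
    moreover have "real (LCS \<pi> (rev \<pi>')) \<le> real (s * h)" using B2 by linarith
    ultimately show ?thesis using r1' r2' by (simp add: max_def)
  qed
  thus ?thesis using mp mp' by blast
qed

end
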